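(* Let $\mathbf{x}$ be a feasible solution of $\textsc{Dir-MC-Rel}$ and let $\theta$ be chosen uniformly at random from $(0,1)$. Then for every edge $e\in E$, $\Pr[e\in C(\theta)]\le 2x_e$.
   Context: $G=(V,E)$ is a directed graph with non-negative edge weights $w_e$ and distinct terminals $s_1,\dots,s_k$, $k\ge2$. For $i\neq j$, $\mathcal{P}_{ij}$ is the set of directed paths from $s_i$ to $s_j$ in $G$. $\textsc{Dir-MC-Rel}$: minimize $\sum_e w_e x_e$ s.t. $\sum_{e\in p}x_e\ge1$ for all $p\in\mathcal{P}_{ij}$, $i\ne j$, and $x\ge0$. Given feasible $\mathbf{x}$, form $G^+$ by adding new vertices $t_1,\dots,t_k$ and new edges $(t_i,s_j)$ for all $i\neq j$, each with $x$-value $0$. For vertices $u,v$ of $G^+$, $d(u,v)$ is the length of a shortest directed path from $u$ to $v$ in $G^+$ with edge lengths $\mathbf{x}$ ($+\infty$ if none). $B(v,r)=\{u: d(v,u)\le r\}$. For a vertex set $A$, $\delta^+(A)$ is the set of edges of $G^+$ with tail in $A$ and head not in $A$. For $\theta\in(0,1)$, $C(\theta)=\bigcup_{i=1}^k\delta^+(B(t_i,\theta))$. *)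

theory Defs
  imports "HOL-Analysis.Analysis"
begin

definition is_dpath :: "'a set \<Rightarrow> ('a \<times> 'a) set \<Rightarrow> 'a list \<Rightarrow> bool" where
  "is_dpath V E p \<longleftrightarrow> p \<noteq> [] \<and> distinct p \<and> set p \<subseteq> V \<and>
     (\<forall>i < length p - 1. (p ! i, p ! Suc i) \<in> E)"

definition path_edges :: "'a list \<Rightarrow> ('a \<times> 'a) list" where
  "path_edges p = zip p (tl p)"

definition dpaths :: "'a set \<Rightarrow> ('a \<times> 'a) set \<Rightarrow> 'a \<Rightarrow> 'a \<Rightarrow> 'a list set" where
  "dpaths V E u v = {p. is_dpath V E p \<and> hd p = u \<and> last p = v}"

definition path_len :: "('a \<times> 'a \<Rightarrow> real) \<Rightarrow> 'a list \<Rightarrow> real" where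
  "path_len x p = sum_list (map x (path_edges p))"

definition dir_mc_feasible ::
  "'a set \<Rightarrow> ('a \<times> 'a) set \<Rightarrow> (nat \<Rightarrow> 'a) \<Rightarrow> nat \<Rightarrow> ('a \<times> 'a \<Rightarrow> real) \<Rightarrow> bool" where
  "dir_mc_feasible V E s k x \<longleftrightarrow>
     (\<forall>e\<in>E. 0 \<le> x e) \<and>
     (\<forall>i<k. \<forall>j<k. i \<noteq> j \<longrightarrow> (\<forall>p \<in> dpaths V E (s i) (s j). 1 \<le> path_len x p))"

(* G+: original vertices Inl v, new vertices t_i = Inr i *)
definition Vplus :: "'a set \<Rightarrow> nat \<Rightarrow> ('a + nat) set" where
  "Vplus V k = Inl ` V \<union> Inr ` {..<k}"

definition Eplus :: "('a \<times> 'a) set \<Rightarrow> (nat \<Rightarrow> 'a) \<Rightarrow> nat \<Rightarrow> (('a + nat) \<times> ('a + nat)) set" where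
  "Eplus E s k = map_prod Inl Inl ` E \<union>
     {(Inr i, Inl (s j)) | i j. i < k \<and> j < k \<and> i \<noteq> j}"

fun xplus :: "('a \<times> 'a \<Rightarrow> real) \<Rightarrow> ('a + nat) \<times> ('a + nat) \<Rightarrow> real" where
  "xplus x (Inl a, Inl b) = x (a, b)"
| "xplus x _ = 0"

(* shortest-path distance in G+ w.r.t. lengths x (infinity if no path) *)
definition dplus ::
  "'a set \<Rightarrow> ('a \<times> 'a) set \<Rightarrow> (nat \<Rightarrow> 'a) \<Rightarrow> nat \<Rightarrow> ('a \<times> 'a \<Rightarrow> real)
    \<Rightarrow> 'a + nat \<Rightarrow> 'a + nat \<Rightarrow> ereal" where
  "dplus V E s k x u v =
     (INF p \<in> dpaths (Vplus V k) (Eplus E s k) u v. ereal (path_len (xplus x) p))"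

definition ballplus ::
  "'a set \<Rightarrow> ('a \<times> 'a) set \<Rightarrow> (nat \<Rightarrow> 'a) \<Rightarrow> nat \<Rightarrow> ('a \<times> 'a \<Rightarrow> real)
    \<Rightarrow> 'a + nat \<Rightarrow> real \<Rightarrow> ('a + nat) set" where
  "ballplus V E s k x v r = {u \<in> Vplus V k. dplus V E s k x v u \<le> ereal r}"

definition delta_out :: "('b \<times> 'b) set \<Rightarrow> 'b set \<Rightarrow> ('b \<times> 'b) set" where
  "delta_out F A = {(a, b) \<in> F. a \<in> A \<and> b \<notin> A}"

definition cut_C ::
  "'a set \<Rightarrow> ('a \<times> 'a) set \<Rightarrow> (nat \<Rightarrow> 'a) \<Rightarrow> nat \<Rightarrow> ('a \<times> 'a \<Rightarrow> real)
    \<Rightarrow> real \<Rightarrow> (('a + nat) \<times> ('a + nat)) set" where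
  "cut_C V E s k x \<theta> = (\<Union>i<k. delta_out (Eplus E s k) (ballplus V E s k x (Inr i) \<theta>))"

end

theory Submission
  imports Defs
begin


lemma path_edges_snoc: "xs \<noteq> [] \<Longrightarrow> path_edges (xs @ [v]) = path_edges xs @ [(last xs, v)]"
proof (induction xs)
  case Nil then show ?case by simp
next
  case (Cons a xs)
  then show ?case by (cases xs) (auto simp: path_edges_def)
qed

lemma path_edges_Cons: "q \<noteq> [] \<Longrightarrow> path_edges (u # q) = (u, hd q) # path_edges q"
  by (cases q) (auto simp: path_edges_def)

lemma path_edges_take: "path_edges (take n p) = take (n - 1) (path_edges p)"
  unfolding path_edges_def
proof (induction p arbitrary: n)
  case Nil then show ?case by simp
next
  case (Cons a p) then show ?case using Cons.IH[of "n - 1"]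
    apply (cases n) apply simp
    apply (cases p) apply simp
    apply (rename_tac m b q) apply (case_tac m) apply simp apply simp
    done
qed

lemma path_edges_sub: "is_dpath V E p \<Longrightarrow> set (path_edges p) \<subseteq> E"
  unfolding path_edges_def is_dpath_def
  by (auto simp: set_zip nth_tl)

lemma take_dpath: assumes "is_dpath V E p" "n < length p"
  shows "is_dpath V E (take (Suc n) p)"
  using assms unfolding is_dpath_def
  by (auto dest: in_set_takeD)

locale gsetup =
  fixes V :: "'a set" and E :: "('a \<times> 'a) set" and s :: "nat \<Rightarrow> 'a" and k :: nat
    and x :: "'a \<times> 'a \<Rightarrow> real"
  assumes finV: "finite V" and nonneg: "\<forall>e\<in>E. 0 \<le> x e"
begin

abbreviation "VP \<equiv> Vplus V k"
abbreviation "EP \<equiv> Eplus E s k"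
abbreviation "X \<equiv> xplus x"
abbreviation "D \<equiv> dplus V E s k x"

lemma EP_head: "(u, v) \<in> EP \<Longrightarrow> \<exists>w. v = Inl w"
  unfolding Eplus_def by auto

lemma X_nonneg: "u \<in> EP \<Longrightarrow> 0 \<le> X u"
  using nonneg unfolding Eplus_def by auto

lemma len_nonneg: assumes "is_dpath VP EP p" shows "0 \<le> path_len X p"
  unfolding path_len_def
proof (rule sum_list_nonneg)
  fix y assume "y \<in> set (map X (path_edges p))"
  then obtain u where "u \<in> set (path_edges p)" "y = X u" by auto
  then show "0 \<le> y" using path_edges_sub[OF assms] X_nonneg by (metis subsetD)
qed

lemma finite_dp: "finite (dpaths VP EP u v)"
proof -
  have "finite VP" using finV unfolding Vplus_def by auto
  then have "finite {xs. set xs \<subseteq> VP \<and> distinct xs}" by (rule finite_subset_distinct)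
  then show ?thesis
    by (rule rev_finite_subset) (auto simp: dpaths_def is_dpath_def)
qed

lemma D_empty: "dpaths VP EP u v = {} \<Longrightarrow> D u v = \<infinity>"
  unfolding dplus_def by (simp add: top_ereal_def)

lemma D_le: "p \<in> dpaths VP EP u v \<Longrightarrow> D u v \<le> ereal (path_len X p)"
  unfolding dplus_def by (rule INF_lower)

lemma D_attained: assumes "dpaths VP EP u v \<noteq> {}"
  shows "\<exists>p \<in> dpaths VP EP u v. D u v = ereal (path_len X p)"
proof -
  let ?A = "(\<lambda>p. ereal (path_len X p)) ` dpaths VP EP u v"
  have "finite ?A" "?A \<noteq> {}" using finite_dp assms by auto
  then have "Inf ?A \<in> ?A"
    by (simp add: cInf_eq_Min)
  then show ?thesis unfolding dplus_def by auto
qed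


lemma len_take: assumes "is_dpath VP EP p"
  shows "path_len X (take n p) \<le> path_len X p"
proof -
  have "path_len X p = sum_list (map X (take (n - 1) (path_edges p))) + sum_list (map X (drop (n - 1) (path_edges p)))"
    unfolding path_len_def by (metis append_take_drop_id map_append sum_list_append)
  moreover have "0 \<le> sum_list (map X (drop (n - 1) (path_edges p)))"
  proof (rule sum_list_nonneg)
    fix y assume "y \<in> set (map X (drop (n - 1) (path_edges p)))"
    then obtain u where "u \<in> set (path_edges p)" "y = X u" by (auto dest: in_set_dropD)
    then show "0 \<le> y" using path_edges_sub[OF assms] X_nonneg by (metis subsetD)
  qed
  ultimately show ?thesis unfolding path_len_def path_edges_take by (simp add: take_map)
qed

lemma triangle: assumes "(a, b) \<in> E" and EV: "E \<subseteq> V \<times> V"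
  shows "D u (Inl b) \<le> D u (Inl a) + ereal (x (a, b))"
proof (cases "dpaths VP EP u (Inl a) = {}")
  case True then show ?thesis using D_empty by simp
next
  case False
  then obtain p where p: "p \<in> dpaths VP EP u (Inl a)" and Dp: "D u (Inl a) = ereal (path_len X p)"
    using D_attained by blast
  have xab: "0 \<le> x (a, b)" using nonneg assms by auto
  have pd: "is_dpath VP EP p" "hd p = u" "last p = Inl a" using p by (auto simp: dpaths_def)
  have "D u (Inl b) \<le> ereal (path_len X p + x (a, b))"
  proof (cases "Inl b \<in> set p")
    case True
    then obtain n where n: "n < length p" "p ! n = Inl b" by (auto simp: in_set_conv_nth)
    let ?q = "take (Suc n) p"
    have "?q \<in> dpaths VP EP u (Inl b)"
      using take_dpath[OF pd(1) n(1)] pd n apply (auto simp: dpaths_def is_dpath_def hd_take last_conv_nth min_def)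
      apply (subgoal_tac "n = length p - Suc 0")
       apply simp
      apply arith
      done
    then have "D u (Inl b) \<le> ereal (path_len X ?q)" by (rule D_le)
    also have "\<dots> \<le> ereal (path_len X p + x (a, b))" using len_take[OF pd(1), of "Suc n"] xab by simp
    finally show ?thesis .
  next
    case False
    have pne: "p \<noteq> []" using pd by (simp add: is_dpath_def)
    have bV: "Inl b \<in> VP" using assms unfolding Vplus_def by auto
    have abE: "(Inl a, Inl b) \<in> EP" using assms unfolding Eplus_def by force
    have "is_dpath VP EP (p @ [Inl b])"
      using pd(1) False bV abE pd(3) pne unfolding is_dpath_def
      apply (auto simp: nth_append last_conv_nth less_Suc_eq)
      apply (rename_tac i, subgoal_tac "i = length p - Suc 0")
       apply simp
      apply arith
      done
    then have "p @ [Inl b] \<in> dpaths VP EP u (Inl b)"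
      using pd pne by (simp add: dpaths_def)
    then have "D u (Inl b) \<le> ereal (path_len X (p @ [Inl b]))" by (rule D_le)
    also have "path_len X (p @ [Inl b]) = path_len X p + x (a, b)"
      using pne pd(3) by (simp add: path_len_def path_edges_snoc)
    finally show ?thesis .
  qed
  then show ?thesis using Dp by simp
qed

lemma redirect: assumes p: "p \<in> dpaths VP EP (Inr i) (Inl a)"
  shows "\<exists>j<k. \<forall>i'<k. i' \<noteq> j \<longrightarrow> D (Inr i') (Inl a) \<le> ereal (path_len X p)"
proof -
  have pd: "is_dpath VP EP p" "hd p = Inr i" "last p = Inl a" using p by (auto simp: dpaths_def)
  then obtain q where pq: "p = Inr i # q" unfolding is_dpath_def by (cases p) auto
  have qne: "q \<noteq> []" using pd(3) pq by auto
  have edges: "\<forall>m < length p - 1. (p ! m, p ! Suc m) \<in> EP" using pd(1) by (simp add: is_dpath_def)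
  have "(Inr i, hd q) \<in> EP" using edges[rule_format, of 0] pq qne by (simp add: hd_conv_nth)
  then obtain j where j: "j < k" "hd q = Inl (s j)" unfolding Eplus_def by auto
  have qInl: "\<forall>v \<in> set q. \<exists>w. v = Inl w"
  proof
    fix v assume "v \<in> set q"
    then obtain m where m: "m < length q" "q ! m = v" by (auto simp: in_set_conv_nth)
    have "(p ! m, p ! Suc m) \<in> EP" using edges m pq by auto
    then show "\<exists>w. v = Inl w" using EP_head m pq by simp
  qed
  have "\<forall>i'<k. i' \<noteq> j \<longrightarrow> D (Inr i') (Inl a) \<le> ereal (path_len X p)"
  proof (intro allI impI)
    fix i' assume i': "i' < k" "i' \<noteq> j"
    have notin: "Inr i' \<notin> set q" using qInl by auto
    have e0: "(Inr i', hd q) \<in> EP" using i' j unfolding Eplus_def by auto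
    have "is_dpath VP EP (Inr i' # q)"
      unfolding is_dpath_def
    proof (intro conjI allI impI)
      show "Inr i' # q \<noteq> []" by simp
      show "distinct (Inr i' # q)" using notin pd(1) pq by (simp add: is_dpath_def)
      show "set (Inr i' # q) \<subseteq> VP" using pd(1) pq i' by (auto simp: is_dpath_def Vplus_def)
      fix m assume m: "m < length (Inr i' # q) - 1"
      show "((Inr i' # q) ! m, (Inr i' # q) ! Suc m) \<in> EP"
      proof (cases m)
        case 0 then show ?thesis using e0 qne by (simp add: hd_conv_nth)
      next
        case (Suc m')
        then show ?thesis using edges[rule_format, of m] m pq by simp
      qed
    qed
    then have "Inr i' # q \<in> dpaths VP EP (Inr i') (Inl a)"
      using pd(3) pq qne by (simp add: dpaths_def)
    then have "D (Inr i') (Inl a) \<le> ereal (path_len X (Inr i' # q))" by (rule D_le)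
    also have "path_len X (Inr i' # q) = path_len X p"
      using pq qne by (simp add: path_len_def path_edges_Cons)
    finally show "D (Inr i') (Inl a) \<le> ereal (path_len X p)" .
  qed
  then show ?thesis using j by blast
qed

lemma Dstruct: assumes "0 < k"
  shows "\<exists>m j. \<forall>i<k. i \<noteq> j \<longrightarrow> D (Inr i) (Inl a) = m"
proof -
  let ?A = "(\<lambda>i. D (Inr i) (Inl a)) ` {..<k}"
  have "finite ?A" "?A \<noteq> {}" using assms by auto
  then have "Min ?A \<in> ?A" by (rule Min_in)
  then obtain i0 where i0: "i0 < k" "D (Inr i0) (Inl a) = Min ?A" by auto
  have minle: "\<And>i. i < k \<Longrightarrow> Min ?A \<le> D (Inr i) (Inl a)"
    using \<open>finite ?A\<close> by auto
  show ?thesis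
  proof (cases "dpaths VP EP (Inr i0) (Inl a) = {}")
    case True
    then have "Min ?A = \<infinity>" using i0 D_empty by simp
    then have "\<forall>i<k. D (Inr i) (Inl a) = \<infinity>" using minle by (metis top_ereal_def top.extremum_uniqueI)
    then show ?thesis by blast
  next
    case False
    then obtain p where p: "p \<in> dpaths VP EP (Inr i0) (Inl a)"
       and Dp: "D (Inr i0) (Inl a) = ereal (path_len X p)" using D_attained by blast
    obtain j where "j < k" "\<forall>i'<k. i' \<noteq> j \<longrightarrow> D (Inr i') (Inl a) \<le> ereal (path_len X p)"
      using redirect[OF p] by blast
    then have "\<forall>i<k. i \<noteq> j \<longrightarrow> D (Inr i) (Inl a) = Min ?A"
      using minle i0 Dp by (auto intro: order_antisym)
    then show ?thesis by blast
  qed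
qed

end

lemma J_cases: "{\<theta>::real. c \<le> ereal \<theta> \<and> ereal \<theta> < c + ereal r} = {} \<or>
   (\<exists>l. {\<theta>::real. c \<le> ereal \<theta> \<and> ereal \<theta> < c + ereal r} = {l..<l+r})"
  by (cases c) auto

lemma J_meas: assumes "0 \<le> r"
  shows "{\<theta>::real. c \<le> ereal \<theta> \<and> ereal \<theta> < c + ereal r} \<in> fmeasurable lborel \<and>
         measure lborel {\<theta>::real. c \<le> ereal \<theta> \<and> ereal \<theta> < c + ereal r} \<le> r"
proof -
  have Ico: "{l..<l+r} \<in> fmeasurable lborel" for l :: real
    using assms by (auto simp: fmeasurable_def)
  show ?thesis
    using J_cases[of c r]
  proof
    assume h: "{\<theta>::real. c \<le> ereal \<theta> \<and> ereal \<theta> < c + ereal r} = {}"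
    show ?thesis unfolding h using assms by simp
  next
    assume "\<exists>l. {\<theta>::real. c \<le> ereal \<theta> \<and> ereal \<theta> < c + ereal r} = {l..<l+r}"
    then obtain l where h: "{\<theta>::real. c \<le> ereal \<theta> \<and> ereal \<theta> < c + ereal r} = {l..<l+r}" by blast
    show ?thesis unfolding h using Ico[of l] assms by simp
  qed
qed

theorem mainTheorem3:
  fixes V :: "'a set" and E :: "('a \<times> 'a) set" and s :: "nat \<Rightarrow> 'a" and k :: nat
    and x :: "'a \<times> 'a \<Rightarrow> real" and e :: "'a \<times> 'a"
  assumes "finite V" and "E \<subseteq> V \<times> V"
    and "2 \<le> k" and "inj_on s {..<k}" and "s ` {..<k} \<subseteq> V"
    and "dir_mc_feasible V E s k x"
    and "e \<in> E"
  shows "{\<theta> \<in> {0<..<1}. map_prod Inl Inl e \<in> cut_C V E s k x \<theta>} \<in> sets lborel \<and>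
         measure (uniform_measure lborel {0<..<(1::real)})
           {\<theta> \<in> {0<..<1}. map_prod Inl Inl e \<in> cut_C V E s k x \<theta>} \<le> 2 * x e"
proof -
  have nonneg: "\<forall>e\<in>E. 0 \<le> x e" using assms(6) by (simp add: dir_mc_feasible_def)
  interpret g: gsetup V E s k x using assms(1) nonneg by unfold_locales
  obtain a b where e: "e = (a, b)" by (cases e)
  have xe: "0 \<le> x e" using nonneg assms(7) by auto
  have aV: "Inl a \<in> Vplus V k" "Inl b \<in> Vplus V k" using assms(2,7) e unfolding Vplus_def by auto
  have abE: "(Inl a, Inl b) \<in> Eplus E s k" using assms(7) e unfolding Eplus_def by force
  define S where "S = {\<theta> \<in> {0<..<1}. map_prod Inl Inl e \<in> cut_C V E s k x \<theta>}"
  let ?D = "dplus V E s k x"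
  have Seq: "S = {0<..<1} \<inter> (\<Union>i<k. {\<theta>. ?D (Inr i) (Inl a) \<le> ereal \<theta>} \<inter> {\<theta>. \<not> ?D (Inr i) (Inl b) \<le> ereal \<theta>})"
    unfolding S_def cut_C_def delta_out_def ballplus_def using aV abE e by auto
  have Smeas: "S \<in> sets borel" unfolding Seq by measurable
  obtain m j where mj: "\<forall>i<k. i \<noteq> j \<longrightarrow> ?D (Inr i) (Inl a) = m"
    using g.Dstruct[of a] assms(3) by auto
  define J where "J c = {\<theta>::real. c \<le> ereal \<theta> \<and> ereal \<theta> < c + ereal (x e)}" for c
  have sub: "S \<subseteq> J m \<union> J (?D (Inr j) (Inl a))"
  proof
    fix \<theta> assume "\<theta> \<in> S"
    then obtain i where i: "i < k" "?D (Inr i) (Inl a) \<le> ereal \<theta>" "\<not> ?D (Inr i) (Inl b) \<le> ereal \<theta>"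
      unfolding Seq by auto
    have "?D (Inr i) (Inl b) \<le> ?D (Inr i) (Inl a) + ereal (x e)"
      using g.triangle[of a b "Inr i"] assms(2,7) e by simp
    then have "\<theta> \<in> J (?D (Inr i) (Inl a))" using i unfolding J_def by auto
    then show "\<theta> \<in> J m \<union> J (?D (Inr j) (Inl a))" using mj i(1) by (cases "i = j") auto
  qed
  have J1: "J m \<in> fmeasurable lborel" "measure lborel (J m) \<le> x e"
    using J_meas[OF xe, of m] unfolding J_def by auto
  have J2: "J (?D (Inr j) (Inl a)) \<in> fmeasurable lborel" "measure lborel (J (?D (Inr j) (Inl a))) \<le> x e"
    using J_meas[OF xe, of "?D (Inr j) (Inl a)"] unfolding J_def by auto
  have "measure lborel S \<le> measure lborel (J m \<union> J (?D (Inr j) (Inl a)))"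
    using sub Smeas J1(1) J2(1) by (intro measure_mono_fmeasurable) (auto intro: fmeasurable.Un)
  also have "\<dots> \<le> measure lborel (J m) + measure lborel (J (?D (Inr j) (Inl a)))"
    using J1(1) J2(1) by (intro measure_Un_le) (auto intro: fmeasurableD)
  finally have mS: "measure lborel S \<le> 2 * x e" using J1(2) J2(2) by simp
  have "measure (uniform_measure lborel {0<..<(1::real)}) S = measure lborel ({0<..<1} \<inter> S) / measure lborel {0<..<(1::real)}"
    using Smeas by (intro measure_uniform_measure) auto
  also have "\<dots> = measure lborel S" unfolding Seq by (simp add: Int_assoc[symmetric])
  finally show ?thesis using mS Smeas unfolding S_def by simp
qed

end
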